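(* Let $n, d, d_k, m \ge 1$ and fix deterministic parameters $W_Q, W_K \in \mathbb{R}^{d\times d_k}$, $W_V \in \mathbb{R}^{d\times d}$, $W_1 \in \mathbb{R}^{m\times d}$, $b_1\in\mathbb{R}^m$, $W_2\in\mathbb{R}^{d\times m}$, $b_2\in\mathbb{R}^d$. For $x\in\mathbb{R}^{n\times d}$ let $\mathrm{Attn}(x) = \mathrm{softmax}\big((xW_Q)(xW_K)^\top/\sqrt{d_k}\big)\, x W_V$ (row-wise softmax), and for $y \in \mathbb{R}^d$ let $\mathrm{FFN}(y) = W_2\,\phi(W_1 y + b_1) + b_2$ where the GELU nonlinearity is replaced by its linearization $\phi(u) = \tfrac12 u$ (applied entrywise). Let $h^{(0)}\in\mathbb{R}^{n\times d}$ have independent rows $h^{(0)}_t \sim N(0,\sigma^2 I_d)$, let $\tilde h^{(0)} = h^{(0)} + \mathrm{Attn}(h^{(0)})$, and define the Transformer update for token $t$ by $F_{\mathrm{Trans},t} = \mathrm{Attn}(h^{(0)})_t + \mathrm{FFN}(\tilde h^{(0)}_t)$ (rows viewed as column vectors). Then for every $t$, $$\mu_{F,\mathrm{Trans}} := \mathbb{E}[F_{\mathrm{Trans},t}] = \tfrac12 W_2 b_1 + b_2.$$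
   Context: This is a one-layer Transformer block without layer normalization: $h^{(1)} = h^{(0)} + \mathrm{Attn}(h^{(0)}) + \mathrm{FFN}(h^{(0)}+\mathrm{Attn}(h^{(0)}))$, with FFN applied token-wise. Row-wise softmax: $\mathrm{softmax}(S)_{ij} = e^{S_{ij}}/\sum_k e^{S_{ik}}$. The paper's standing convention replaces $\mathrm{GELU}(u)$ by its first-order approximation $\tfrac12 u$. *)

theory Defs
  imports "HOL-Probability.Probability"
begin

text \<open>Matrices are functions nat => nat => real with explicit dimensions;
  x is n x d (token t, feature j). Vectors are nat => real.\<close>

definition attn_score ::
  "nat \<Rightarrow> nat \<Rightarrow> (nat \<Rightarrow> nat \<Rightarrow> real) \<Rightarrow> (nat \<Rightarrow> nat \<Rightarrow> real)
   \<Rightarrow> (nat \<Rightarrow> nat \<Rightarrow> real) \<Rightarrow> nat \<Rightarrow> nat \<Rightarrow> real" where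
  "attn_score d dk WQ WK x t s =
     (\<Sum>k<dk. (\<Sum>j<d. x t j * WQ j k) * (\<Sum>j<d. x s j * WK j k)) / sqrt (real dk)"

definition attn_weights ::
  "nat \<Rightarrow> nat \<Rightarrow> nat \<Rightarrow> (nat \<Rightarrow> nat \<Rightarrow> real) \<Rightarrow> (nat \<Rightarrow> nat \<Rightarrow> real)
   \<Rightarrow> (nat \<Rightarrow> nat \<Rightarrow> real) \<Rightarrow> nat \<Rightarrow> nat \<Rightarrow> real" where
  "attn_weights n d dk WQ WK x t s =
     exp (attn_score d dk WQ WK x t s) / (\<Sum>r<n. exp (attn_score d dk WQ WK x t r))"

definition Attn ::
  "nat \<Rightarrow> nat \<Rightarrow> nat \<Rightarrow> (nat \<Rightarrow> nat \<Rightarrow> real) \<Rightarrow> (nat \<Rightarrow> nat \<Rightarrow> real)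
   \<Rightarrow> (nat \<Rightarrow> nat \<Rightarrow> real) \<Rightarrow> (nat \<Rightarrow> nat \<Rightarrow> real) \<Rightarrow> nat \<Rightarrow> nat \<Rightarrow> real" where
  "Attn n d dk WQ WK WV x t j =
     (\<Sum>s<n. attn_weights n d dk WQ WK x t s * (\<Sum>i<d. x s i * WV i j))"

definition phi_lin :: "real \<Rightarrow> real" where
  "phi_lin u = u / 2"

definition FFN ::
  "nat \<Rightarrow> nat \<Rightarrow> (nat \<Rightarrow> nat \<Rightarrow> real) \<Rightarrow> (nat \<Rightarrow> real) \<Rightarrow> (nat \<Rightarrow> nat \<Rightarrow> real)
   \<Rightarrow> (nat \<Rightarrow> real) \<Rightarrow> (nat \<Rightarrow> real) \<Rightarrow> nat \<Rightarrow> real" where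
  "FFN d m W1 b1 W2 b2 y i =
     (\<Sum>l<m. W2 i l * phi_lin ((\<Sum>j<d. W1 l j * y j) + b1 l)) + b2 i"

definition F_trans ::
  "nat \<Rightarrow> nat \<Rightarrow> nat \<Rightarrow> nat \<Rightarrow> (nat \<Rightarrow> nat \<Rightarrow> real) \<Rightarrow> (nat \<Rightarrow> nat \<Rightarrow> real)
   \<Rightarrow> (nat \<Rightarrow> nat \<Rightarrow> real) \<Rightarrow> (nat \<Rightarrow> nat \<Rightarrow> real) \<Rightarrow> (nat \<Rightarrow> real)
   \<Rightarrow> (nat \<Rightarrow> nat \<Rightarrow> real) \<Rightarrow> (nat \<Rightarrow> real)
   \<Rightarrow> (nat \<Rightarrow> nat \<Rightarrow> real) \<Rightarrow> nat \<Rightarrow> nat \<Rightarrow> real" where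
  "F_trans n d dk m WQ WK WV W1 b1 W2 b2 x t i =
     Attn n d dk WQ WK WV x t i
     + FFN d m W1 b1 W2 b2 (\<lambda>j. x t j + Attn n d dk WQ WK WV x t j) i"

definition gauss_iso :: "nat \<Rightarrow> real \<Rightarrow> (nat \<Rightarrow> real) measure" where
  "gauss_iso d \<sigma> = PiM {..<d} (\<lambda>_. density lborel (normal_density 0 \<sigma>))"

end

theory Submission
  imports Defs
begin

abbreviation "gd \<sigma> \<equiv> density lborel (normal_density 0 \<sigma>)"

lemma nd_sym: "normal_density 0 \<sigma> (- x) = normal_density 0 \<sigma> x"
  by (simp add: normal_density_def)

lemma sets_gd: "sets (gd \<sigma>) = sets borel" by simp

lemma gd_sym: "distr (gd \<sigma>) (gd \<sigma>) uminus = gd \<sigma>"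
proof -
  have "gd \<sigma> = density (distr lborel borel uminus) (normal_density 0 \<sigma>)"
    by (simp add: lborel_distr_uminus)
  also have "\<dots> = distr (density lborel (\<lambda>x. normal_density 0 \<sigma> (- x))) borel uminus"
    by (rule density_distr) auto
  also have "\<dots> = distr (gd \<sigma>) (gd \<sigma>) uminus"
    by (intro distr_cong) (auto simp: nd_sym)
  finally show ?thesis by simp
qed

lemma sets_gauss_iso: "sets (gauss_iso d \<sigma>) = sets (PiM {..<d} (\<lambda>_. borel))"
  unfolding gauss_iso_def by (intro sets_PiM_cong) auto

lemma prob_gauss_iso: "0 < \<sigma> \<Longrightarrow> prob_space (gauss_iso d \<sigma>)"
  unfolding gauss_iso_def by (rule prob_space_PiM) (rule prob_space_normal_density)

lemma gauss_iso_sym: "0 < \<sigma> \<Longrightarrow> distr (gauss_iso d \<sigma>) (gauss_iso d \<sigma>) (compose {..<d} uminus) = gauss_iso d \<sigma>"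
  unfolding gauss_iso_def
  by (subst distr_PiM_finite_prob_space') (auto simp: prob_space_normal_density gd_sym)

lemma compose_meas: "compose {..<d} uminus \<in> PiM {..<d} (\<lambda>_. borel) \<rightarrow>\<^sub>M PiM {..<d} (\<lambda>_. (borel::real measure))"
  unfolding compose_def by measurable

lemma P_sym: "0 < \<sigma> \<Longrightarrow> distr (PiM {..<n} (\<lambda>_. gauss_iso d \<sigma>)) (PiM {..<n} (\<lambda>_. gauss_iso d \<sigma>))
     (compose {..<n::nat} (compose {..<d} uminus)) = PiM {..<n} (\<lambda>_. gauss_iso d \<sigma>)"
  apply (subst distr_PiM_finite_prob_space')
  by (auto intro: prob_gauss_iso simp: gauss_iso_sym measurable_cong_sets[OF sets_gauss_iso sets_gauss_iso] compose_meas)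

lemma Attn_cong:
  assumes "\<And>s j. s < n \<Longrightarrow> j < d \<Longrightarrow> x s j = x' s j" "t < n"
  shows "Attn n d dk WQ WK WV x t i = Attn n d dk WQ WK WV x' t i"
proof -
  have xx: "\<forall>s<n. \<forall>j<d. x s j = x' s j" using assms(1) by blast
  show ?thesis
  unfolding Attn_def attn_weights_def attn_score_def
  using xx assms(2) by (auto intro!: sum.cong arg_cong2[where f="(*)"] arg_cong2[where f="(/)"] arg_cong[where f=exp])
qed

lemma F_cong:
  assumes "\<And>s j. s < n \<Longrightarrow> j < d \<Longrightarrow> x s j = x' s j" "t < n"
  shows "F_trans n d dk m WQ WK WV W1 b1 W2 b2 x t i = F_trans n d dk m WQ WK WV W1 b1 W2 b2 x' t i"
proof -
  have "\<And>j. Attn n d dk WQ WK WV x t j = Attn n d dk WQ WK WV x' t j"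
    by (rule Attn_cong[OF assms])
  moreover have "\<forall>j<d. x t j = x' t j" using assms by blast
  ultimately show ?thesis unfolding F_trans_def FFN_def using assms by (auto intro!: sum.cong arg_cong[where f=phi_lin])
qed

lemma Attn_neg:
  "Attn n d dk WQ WK WV (\<lambda>s j. - x s j) t j = - Attn n d dk WQ WK WV x t j"
  unfolding Attn_def attn_weights_def attn_score_def
  by (simp add: sum_negf sum_distrib_left[symmetric])

lemma F_neg:
  "F_trans n d dk m WQ WK WV W1 b1 W2 b2 (\<lambda>s j. - x s j) t i
   + F_trans n d dk m WQ WK WV W1 b1 W2 b2 x t i = 2 * ((1/2) * (\<Sum>l<m. W2 i l * b1 l) + b2 i)"
proof -
  define L where "L l = (\<Sum>j<d. W1 l j * (x t j + Attn n d dk WQ WK WV x t j))" for l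
  have L: "(\<Sum>j<d. W1 l j * (- x t j + - Attn n d dk WQ WK WV x t j)) = - L l" for l
    unfolding L_def by (simp add: sum_negf[symmetric] algebra_simps)
  have e1: "F_trans n d dk m WQ WK WV W1 b1 W2 b2 (\<lambda>s j. - x s j) t i
     = - Attn n d dk WQ WK WV x t i + (\<Sum>l<m. W2 i l * ((- L l + b1 l) / 2)) + b2 i"
    unfolding F_trans_def FFN_def phi_lin_def by (simp only: Attn_neg L)
  have e2: "F_trans n d dk m WQ WK WV W1 b1 W2 b2 x t i
     = Attn n d dk WQ WK WV x t i + (\<Sum>l<m. W2 i l * ((L l + b1 l) / 2)) + b2 i"
    unfolding F_trans_def FFN_def phi_lin_def L_def by simp
  have "(\<Sum>l<m. W2 i l * ((- L l + b1 l) / 2)) + (\<Sum>l<m. W2 i l * ((L l + b1 l) / 2))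
        = (\<Sum>l<m. W2 i l * b1 l)"
    by (simp add: sum.distrib[symmetric] field_simps)
  then show ?thesis unfolding e1 e2 by simp
qed

lemma Attn_bound:
  assumes "n \<ge> 1"
  shows "\<bar>Attn n d dk WQ WK WV x t j\<bar> \<le> (\<Sum>s<n. \<bar>\<Sum>k<d. x s k * WV k j\<bar>)"
proof -
  let ?e = "\<lambda>r. exp (attn_score d dk WQ WK x t r)"
  have w: "0 \<le> attn_weights n d dk WQ WK x t s \<and> attn_weights n d dk WQ WK x t s \<le> 1" if "s < n" for s
  proof -
    have "?e s \<le> (\<Sum>r<n. ?e r)" using that by (intro member_le_sum) auto
    moreover have "0 < (\<Sum>r<n. ?e r)" using assms by (intro sum_pos) (auto simp: lessThan_empty_iff)
    ultimately show ?thesis unfolding attn_weights_def by (simp add: divide_le_eq_1)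
  qed
  have "\<bar>Attn n d dk WQ WK WV x t j\<bar> \<le> (\<Sum>s<n. \<bar>attn_weights n d dk WQ WK x t s * (\<Sum>k<d. x s k * WV k j)\<bar>)"
    unfolding Attn_def by (rule sum_abs)
  also have "\<dots> \<le> (\<Sum>s<n. \<bar>\<Sum>k<d. x s k * WV k j\<bar>)"
  proof (intro sum_mono)
    fix s assume "s \<in> {..<n}"
    with w[of s] show "\<bar>attn_weights n d dk WQ WK x t s * (\<Sum>k<d. x s k * WV k j)\<bar> \<le> \<bar>\<Sum>k<d. x s k * WV k j\<bar>"
      by (simp add: abs_mult mult_left_le_one_le)
  qed
  finally show ?thesis .
qed

lemma comp_meas[measurable]:
  "(\<lambda>y. y s j) \<in> borel_measurable (PiM {..<n::nat} (\<lambda>_. PiM {..<d::nat} (\<lambda>_. borel::real measure)))"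
proof (cases "s < n \<and> j < d")
  case True
  then have "s \<in> {..<n}" "j \<in> {..<d}" by auto
  have a: "(\<lambda>y. y s) \<in> measurable (PiM {..<n::nat} (\<lambda>_. PiM {..<d::nat} (\<lambda>_. borel::real measure))) (PiM {..<d::nat} (\<lambda>_. borel::real measure))"
    using \<open>s \<in> {..<n}\<close> by (rule measurable_component_singleton)
  have b: "(\<lambda>z. z j) \<in> borel_measurable (PiM {..<d::nat} (\<lambda>_. borel::real measure))"
    using \<open>j \<in> {..<d}\<close> by (rule measurable_component_singleton)
  show ?thesis using measurable_compose[OF a b] by simp
next
  case False
  define c :: real where "c = (if s < n then undefined else undefined j)"
  have "\<forall>y\<in>space (PiM {..<n::nat} (\<lambda>_. PiM {..<d::nat} (\<lambda>_. borel::real measure))). y s j = c"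
    using False by (auto simp: space_PiM PiE_def extensional_def c_def)
  then show ?thesis
    by (subst measurable_cong[where g="\<lambda>_. c"]) auto
qed

lemma sets_P: "sets (PiM {..<n::nat} (\<lambda>_. gauss_iso d \<sigma>)) = sets (PiM {..<n::nat} (\<lambda>_. PiM {..<d::nat} (\<lambda>_. borel::real measure)))"
  by (intro sets_PiM_cong refl sets_gauss_iso)

lemma Attn_meas[measurable]:
  "(\<lambda>y. Attn n d dk WQ WK WV y t j) \<in> borel_measurable (PiM {..<n::nat} (\<lambda>_. PiM {..<d::nat} (\<lambda>_. borel::real measure)))"
  unfolding Attn_def attn_weights_def attn_score_def by measurable

lemma F_meas[measurable]:
  "(\<lambda>y. F_trans n d dk m WQ WK WV W1 b1 W2 b2 y t i) \<in> borel_measurable (PiM {..<n::nat} (\<lambda>_. PiM {..<d::nat} (\<lambda>_. borel::real measure)))"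
  unfolding F_trans_def FFN_def phi_lin_def by measurable

lemma coord_int:
  assumes "0 < \<sigma>" "s < n" "j < d"
  shows "integrable (PiM {..<n::nat} (\<lambda>_. gauss_iso d \<sigma>)) (\<lambda>y. y s j)"
proof -
  have m1: "(\<lambda>y. y s) \<in> measurable (PiM {..<n::nat} (\<lambda>_. gauss_iso d \<sigma>)) (gauss_iso d \<sigma>)"
    using assms by (intro measurable_component_singleton) auto
  have m2: "(\<lambda>z. z j) \<in> borel_measurable (gauss_iso d \<sigma>)"
    unfolding measurable_cong_sets[OF sets_gauss_iso refl] using assms
    by (intro measurable_component_singleton) auto
  have m3: "(\<lambda>z. z j) \<in> measurable (gauss_iso d \<sigma>) (gd \<sigma>)"
    unfolding gauss_iso_def using assms
    by (intro measurable_component_singleton) auto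
  have "integrable (gd \<sigma>) (\<lambda>x. x)"
    using assms by (subst integrable_density) (auto intro: integrable_normal_moment_nz_1)
  also have "gd \<sigma> = distr (gauss_iso d \<sigma>) (gd \<sigma>) (\<lambda>z. z j)"
    unfolding gauss_iso_def using assms
    by (subst distr_PiM_component) (auto intro: prob_space_normal_density)
  finally have "integrable (gauss_iso d \<sigma>) (\<lambda>z. z j)"
    using m3 by (subst (asm) integrable_distr_eq) auto
  also have "gauss_iso d \<sigma> = distr (PiM {..<n::nat} (\<lambda>_. gauss_iso d \<sigma>)) (gauss_iso d \<sigma>) (\<lambda>y. y s)"
    using assms by (subst distr_PiM_component) (auto intro: prob_gauss_iso)
  finally show ?thesis
    using m1 m2 by (subst (asm) integrable_distr_eq) auto
qed

lemma prob_P: "0 < \<sigma> \<Longrightarrow> prob_space (PiM {..<n::nat} (\<lambda>_. gauss_iso d \<sigma>))"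
  by (rule prob_space_PiM) (rule prob_gauss_iso)

lemma meas_P:
  "f \<in> borel_measurable (PiM {..<n::nat} (\<lambda>_. PiM {..<d::nat} (\<lambda>_. borel::real measure)))
   \<Longrightarrow> f \<in> borel_measurable (PiM {..<n::nat} (\<lambda>_. gauss_iso d \<sigma>))"
  using measurable_cong_sets[OF sets_P refl] by blast

lemma Attn_int:
  assumes "0 < \<sigma>" "n \<ge> 1"
  shows "integrable (PiM {..<n::nat} (\<lambda>_. gauss_iso d \<sigma>)) (\<lambda>y. Attn n d dk WQ WK WV y t j)"
proof -
  have a: "integrable (PiM {..<n::nat} (\<lambda>_. gauss_iso d \<sigma>)) (\<lambda>y. \<Sum>s<n. \<bar>\<Sum>k<d. y s k * WV k j\<bar>)"
    by (intro Bochner_Integration.integrable_sum integrable_abs integrable_mult_left coord_int) (use assms in auto)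
  have b: "(\<lambda>y. Attn n d dk WQ WK WV y t j) \<in> borel_measurable (PiM {..<n::nat} (\<lambda>_. gauss_iso d \<sigma>))"
    by (intro meas_P Attn_meas)
  have c: "AE y in PiM {..<n::nat} (\<lambda>_. gauss_iso d \<sigma>). norm (Attn n d dk WQ WK WV y t j) \<le> norm (\<Sum>s<n. \<bar>\<Sum>k<d. y s k * WV k j\<bar>)"
    using Attn_bound[OF assms(2)] by (intro AE_I2) (simp add: sum_nonneg)
  show ?thesis by (rule Bochner_Integration.integrable_bound[OF a b c])
qed

lemma P_main:
  assumes "0 < \<sigma>" "n \<ge> 1" "t < n" "i < d"
  shows "integrable (PiM {..<n::nat} (\<lambda>_. gauss_iso d \<sigma>)) (\<lambda>y. F_trans n d dk m WQ WK WV W1 b1 W2 b2 y t i)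
     \<and> integral\<^sup>L (PiM {..<n::nat} (\<lambda>_. gauss_iso d \<sigma>)) (\<lambda>y. F_trans n d dk m WQ WK WV W1 b1 W2 b2 y t i)
        = (1/2) * (\<Sum>l<m. W2 i l * b1 l) + b2 i"
proof -
  let ?P = "PiM {..<n::nat} (\<lambda>_. gauss_iso d \<sigma>)"
  let ?F = "\<lambda>y. F_trans n d dk m WQ WK WV W1 b1 W2 b2 y t i"
  let ?c = "(1/2) * (\<Sum>l<m. W2 i l * b1 l) + b2 i"
  interpret P: prob_space ?P by (rule prob_P[OF assms(1)])
  have int: "integrable ?P ?F"
    unfolding F_trans_def FFN_def phi_lin_def
    by (intro Bochner_Integration.integrable_add Bochner_Integration.integrable_sum integrable_mult_right integrable_divide_zero
         P.integrable_const Attn_int coord_int) (use assms in auto)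
  have mF: "?F \<in> borel_measurable ?P" by (intro meas_P F_meas)
  have mN: "compose {..<n::nat} (compose {..<d} uminus) \<in> measurable ?P ?P"
    unfolding measurable_cong_sets[OF sets_P sets_P] compose_def by measurable
  have "integral\<^sup>L ?P ?F = integral\<^sup>L (distr ?P ?P (compose {..<n::nat} (compose {..<d} uminus))) ?F"
    using P_sym[OF assms(1)] by simp
  also have "\<dots> = integral\<^sup>L ?P (\<lambda>y. ?F (compose {..<n::nat} (compose {..<d} uminus) y))"
    by (rule integral_distr[OF mN mF])
  also have "\<dots> = integral\<^sup>L ?P (\<lambda>y. 2 * ?c - ?F y)"
  proof (rule Bochner_Integration.integral_cong[OF refl])
    fix y
    have "?F (compose {..<n::nat} (compose {..<d} uminus) y) = F_trans n d dk m WQ WK WV W1 b1 W2 b2 (\<lambda>s j. - y s j) t i"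
      using assms by (intro F_cong) (auto simp: compose_def)
    then show "?F (compose {..<n::nat} (compose {..<d} uminus) y) = 2 * ?c - ?F y"
      using F_neg[of n d dk m WQ WK WV W1 b1 W2 b2 y t i] by simp
  qed
  also have "\<dots> = 2 * ?c - integral\<^sup>L ?P ?F"
    using int by (simp add: P.prob_space)
  finally show ?thesis using int by simp
qed

theorem theorem1:
  fixes n d dk m :: nat and \<sigma> :: real
    and WQ WK WV W1 W2 :: "nat \<Rightarrow> nat \<Rightarrow> real" and b1 b2 :: "nat \<Rightarrow> real"
    and M :: "'a measure" and h :: "'a \<Rightarrow> nat \<Rightarrow> nat \<Rightarrow> real"
  assumes "n \<ge> 1" "d \<ge> 1" "dk \<ge> 1" "m \<ge> 1" "\<sigma> > 0"
    and "prob_space M"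
    and "prob_space.indep_vars M (\<lambda>_. PiM {..<d} (\<lambda>_. borel))
           (\<lambda>t \<omega>. \<lambda>j\<in>{..<d}. h \<omega> t j) {..<n}"
    and "\<And>t. t < n \<Longrightarrow> distr M (PiM {..<d} (\<lambda>_. borel)) (\<lambda>\<omega>. \<lambda>j\<in>{..<d}. h \<omega> t j)
                              = gauss_iso d \<sigma>"
    and "t < n" and "i < d"
  shows "integrable M (\<lambda>\<omega>. F_trans n d dk m WQ WK WV W1 b1 W2 b2 (h \<omega>) t i)
       \<and> (\<integral>\<omega>. F_trans n d dk m WQ WK WV W1 b1 W2 b2 (h \<omega>) t i \<partial>M)
           = (1/2) * (\<Sum>l<m. W2 i l * b1 l) + b2 i"
proof -
  interpret prob_space M by fact
  let ?N = "PiM {..<n::nat} (\<lambda>_. PiM {..<d::nat} (\<lambda>_. borel::real measure))"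
  let ?P = "PiM {..<n::nat} (\<lambda>_. gauss_iso d \<sigma>)"
  let ?G = "\<lambda>y. F_trans n d dk m WQ WK WV W1 b1 W2 b2 y t i"
  define X where "X = (\<lambda>t \<omega>. \<lambda>j\<in>{..<d}. h \<omega> t j)"
  define Xa where "Xa = (\<lambda>\<omega>. \<lambda>t\<in>{..<n}. X t \<omega>)"
  have ind: "indep_vars (\<lambda>_. PiM {..<d} (\<lambda>_. borel)) X {..<n}"
    using assms(7) unfolding X_def .
  then have rv: "\<And>t. t \<in> {..<n} \<Longrightarrow> random_variable (PiM {..<d} (\<lambda>_. borel::real measure)) (X t)"
    unfolding indep_vars_def by blast
  have "distr M ?N Xa = PiM {..<n} (\<lambda>t. distr M (PiM {..<d} (\<lambda>_. borel)) (X t))"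
    unfolding Xa_def
    by (rule indep_vars_iff_distr_eq_PiM'[THEN iffD1, OF _ rv ind]) (use assms(1) in \<open>auto simp: lessThan_empty_iff\<close>)
  also have "\<dots> = ?P"
    by (intro PiM_cong refl) (use assms(8) in \<open>auto simp: X_def\<close>)
  finally have D: "distr M ?N Xa = ?P" .
  have mX: "Xa \<in> measurable M ?N"
    unfolding Xa_def by (intro measurable_restrict rv)
  have eq: "F_trans n d dk m WQ WK WV W1 b1 W2 b2 (h \<omega>) t i = ?G (Xa \<omega>)" for \<omega>
    using assms(9) by (intro F_cong) (auto simp: Xa_def X_def)
  have mG: "?G \<in> borel_measurable ?N" by (rule F_meas)
  have PM: "integrable ?P ?G \<and> integral\<^sup>L ?P ?G = (1/2) * (\<Sum>l<m. W2 i l * b1 l) + b2 i"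
    by (rule P_main) (use assms in auto)
  have "integrable M (\<lambda>\<omega>. ?G (Xa \<omega>))"
    using PM D integrable_distr_eq[OF mX mG] by simp
  moreover have "integral\<^sup>L M (\<lambda>\<omega>. ?G (Xa \<omega>)) = (1/2) * (\<Sum>l<m. W2 i l * b1 l) + b2 i"
    using PM D integral_distr[OF mX mG] by simp
  ultimately show ?thesis unfolding eq by simp
qed

end
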